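(* Let $V$ be a finite set of variables, let $D_{\mathit{ds}}$ be the causal ABA framework defined in the context, let $\sigma\in\{\text{preferred},\text{stable}\}$, let $S\in\sigma(D_{\mathit{ds}})$ and let $G(S)=(V,\{(u,v)\mid\mathit{arr}_{uv}\in S\})$. Then for all distinct $x,y\in V$ and all $\mathbf Z\subseteq V\setminus\{x,y\}$: $(x\perp\!\!\!\perp y\mid\mathbf Z)\in S$ if and only if $x$ and $y$ are d-separated given $\mathbf Z$ in $G(S)$.
   Context: ABA. An ABA framework is $D=(\mathcal L,\mathcal R,\mathcal A,\overline{\cdot})$ with sentences $\mathcal L$, rules $a_0\leftarrow a_1,\dots,a_n$ ($n\ge0$), assumptions $\mathcal A\subseteq\mathcal L$ and contrary function $\overline{\cdot}:\mathcal A\to\mathcal L$. $S\vdash q$ ($S\subseteq\mathcal A$) if there is a finite rooted labelled tree with root $q$, set of leaf labels $S$ or $S\cup\{\top\}$, and every inner node labelled by the head of a rule whose children are labelled by the distinct body elements (one child $\top$ for an empty body). $S$ attacks $T$ if some $S'\subseteq S$ derives $\overline a$ for some $a\in T$. Conflict-free: does not attack itself; $S$ defends $T$ if it attacks every attacker of $T$; admissible: conflict-free and self-defending; complete: admissible and contains every assumption set it defends; preferred: $\subseteq$-maximal complete; stable: admissible and attacks $\{a\}$ for every assumption $a\notin S$. Graphs. A path in a directed graph is a sequence of distinct nodes with consecutive nodes adjacent; an inner node $x_i$ of a path $x_1\dots x_n$ is a collider if $(x_{i-1},x_i)$ and $(x_{i+1},x_i)$ are edges; $z'$ is a descendant of $z$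 if there is a directed path from $z$ to $z'$. For a DAG $H$ and $\mathbf Z\subseteq V\setminus\{x,y\}$, an $x$-$y$-path is $\mathbf Z$-active if every collider on it is in $\mathbf Z$ or has a descendant in $\mathbf Z$, and every other node on it is not in $\mathbf Z$; $x,y$ are d-separated given $\mathbf Z$ if no $\mathbf Z$-active $x$-$y$-path exists. An $x$-$y$-collider-tree of a DAG $H$ is a subgraph $t$ of $H$ together with an $x$-$y$-path $p_t$ in $t$ such that every node of $t$ not on $p_t$ is a descendant of some collider of $p_t$; it is $\mathbf Z$-active if $p_t$ is $\mathbf Z$-active in the graph $(V,\text{edges of }t)$. The framework $D_{\mathit{ds}}$. Assumptions: $\mathit{arr}_{xy}$ for all ordered pairs of distinct $x,y\in V$; one $\mathit{noe}_{xy}=\mathit{noe}_{yx}$ per unordered pair; and independence assumptions $(x\perp\!\!\!\perp y\mid\mathbf Z)$ for all $\mathbf Z\subseteq V$, distinct $x,y\in V\setminus\mathbf Z$, with $(x\perp\!\!\!\perp y\mid\mathbf Z)$ identified with $(y\perp\!\!\!\perp x\mid\mathbf Z)$. Each assumption $a$ has its own distinct fresh contrary $\overline a$. Rules: (i) $\overline a\leftarrow b$ for distinct $a,b\in\{\mathit{arr}_{xy},\mathit{arr}_{yx},\mathit{noe}_{xy}\}$; (ii) for every sequence $x_1\dots x_k$ with consecutive elements distinct and $x_1=x_k$ and every $1\le i<k$: $\overline{\mathit{arr}_{x_ix_{i+1}}}\leftarrow\mathit{arr}_{x_1x_2},\dots,\mathit{arr}_{x_{k-1}x_k}$; (iii)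 $\mathit{dpath}_{xy}\leftarrow\mathit{arr}_{xy}$; $\mathit{dpath}_{xz}\leftarrow\mathit{dpath}_{xy},\mathit{arr}_{yz}$; $e_{xy}\leftarrow\mathit{arr}_{xy}$; $e_{xy}\leftarrow\mathit{arr}_{yx}$; $\overline{\mathit{noe}_{xy}}\leftarrow e_{xy}$; (iv) for all distinct $x,y$, $\mathbf Z\subseteq V\setminus\{x,y\}$ and every $\mathbf Z$-active $x$-$y$-collider-tree $t$ (of any DAG on $V$), the rule $\overline{(x\perp\!\!\!\perp y\mid\mathbf Z)}\leftarrow\{\mathit{arr}_{uv}\mid(u,v)\text{ an edge of }t\}$. *)

theory Defs
  imports Main
begin

inductive derivable :: "('s \<times> 's set) set \<Rightarrow> 's set \<Rightarrow> 's set \<Rightarrow> 's \<Rightarrow> bool"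
  for R :: "('s \<times> 's set) set" and As :: "'s set" and S :: "'s set" where
  leaf: "q \<in> S \<Longrightarrow> q \<in> As \<Longrightarrow> derivable R As S q"
| rule: "(q, B) \<in> R \<Longrightarrow> finite B \<Longrightarrow> (\<forall>b\<in>B. derivable R As S b) \<Longrightarrow> derivable R As S q"

definition attacks :: "('s \<times> 's set) set \<Rightarrow> 's set \<Rightarrow> ('s \<Rightarrow> 's) \<Rightarrow> 's set \<Rightarrow> 's set \<Rightarrow> bool" where
  "attacks R As ctr S T \<longleftrightarrow> (\<exists>a\<in>T. derivable R As S (ctr a))"

definition conflict_free :: "('s \<times> 's set) set \<Rightarrow> 's set \<Rightarrow> ('s \<Rightarrow> 's) \<Rightarrow> 's set \<Rightarrow> bool" where
  "conflict_free R As ctr S \<longleftrightarrow> \<not> attacks R As ctr S S"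

definition defends :: "('s \<times> 's set) set \<Rightarrow> 's set \<Rightarrow> ('s \<Rightarrow> 's) \<Rightarrow> 's set \<Rightarrow> 's set \<Rightarrow> bool" where
  "defends R As ctr S T \<longleftrightarrow>
     (\<forall>U. U \<subseteq> As \<longrightarrow> attacks R As ctr U T \<longrightarrow> attacks R As ctr S U)"

definition admissible :: "('s \<times> 's set) set \<Rightarrow> 's set \<Rightarrow> ('s \<Rightarrow> 's) \<Rightarrow> 's set \<Rightarrow> bool" where
  "admissible R As ctr S \<longleftrightarrow> S \<subseteq> As \<and> conflict_free R As ctr S \<and> defends R As ctr S S"

definition complete_ext :: "('s \<times> 's set) set \<Rightarrow> 's set \<Rightarrow> ('s \<Rightarrow> 's) \<Rightarrow> 's set \<Rightarrow> bool" where
  "complete_ext R As ctr S \<longleftrightarrow> admissible R As ctr S \<and>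
     (\<forall>T. T \<subseteq> As \<longrightarrow> defends R As ctr S T \<longrightarrow> T \<subseteq> S)"

definition preferred_ext :: "('s \<times> 's set) set \<Rightarrow> 's set \<Rightarrow> ('s \<Rightarrow> 's) \<Rightarrow> 's set \<Rightarrow> bool" where
  "preferred_ext R As ctr S \<longleftrightarrow> complete_ext R As ctr S \<and>
     \<not> (\<exists>S'. complete_ext R As ctr S' \<and> S \<subset> S')"

definition stable_ext :: "('s \<times> 's set) set \<Rightarrow> 's set \<Rightarrow> ('s \<Rightarrow> 's) \<Rightarrow> 's set \<Rightarrow> bool" where
  "stable_ext R As ctr S \<longleftrightarrow> admissible R As ctr S \<and>
     (\<forall>a\<in>As - S. attacks R As ctr S {a})"

definition is_path :: "('v \<times> 'v) set \<Rightarrow> 'v list \<Rightarrow> bool" where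
  "is_path E xs \<longleftrightarrow> xs \<noteq> [] \<and> distinct xs \<and>
     (\<forall>i. Suc i < length xs \<longrightarrow> (xs!i, xs!Suc i) \<in> E \<or> (xs!Suc i, xs!i) \<in> E)"

definition is_dir_path :: "('v \<times> 'v) set \<Rightarrow> 'v list \<Rightarrow> bool" where
  "is_dir_path E xs \<longleftrightarrow> xs \<noteq> [] \<and> distinct xs \<and>
     (\<forall>i. Suc i < length xs \<longrightarrow> (xs!i, xs!Suc i) \<in> E)"

definition descendant :: "('v \<times> 'v) set \<Rightarrow> 'v \<Rightarrow> 'v \<Rightarrow> bool" where
  "descendant E z z' \<longleftrightarrow> (\<exists>xs. is_dir_path E xs \<and> hd xs = z \<and> last xs = z')"

definition collider_at :: "('v \<times> 'v) set \<Rightarrow> 'v list \<Rightarrow> nat \<Rightarrow> bool" where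
  "collider_at E xs i \<longleftrightarrow> 0 < i \<and> Suc i < length xs \<and>
     (xs!(i-1), xs!i) \<in> E \<and> (xs!Suc i, xs!i) \<in> E"

definition active :: "('v \<times> 'v) set \<Rightarrow> 'v set \<Rightarrow> 'v list \<Rightarrow> bool" where
  "active E Z xs \<longleftrightarrow> (\<forall>i<length xs.
     (collider_at E xs i \<longrightarrow> (xs!i \<in> Z \<or> (\<exists>z\<in>Z. descendant E (xs!i) z))) \<and>
     (\<not> collider_at E xs i \<longrightarrow> xs!i \<notin> Z))"

definition d_separated :: "('v \<times> 'v) set \<Rightarrow> 'v \<Rightarrow> 'v \<Rightarrow> 'v set \<Rightarrow> bool" where
  "d_separated E x y Z \<longleftrightarrow>
     \<not> (\<exists>p. is_path E p \<and> hd p = x \<and> last p = y \<and> active E Z p)"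

definition is_dag :: "'v set \<Rightarrow> ('v \<times> 'v) set \<Rightarrow> bool" where
  "is_dag V E \<longleftrightarrow> E \<subseteq> V \<times> V \<and> acyclic E"

definition collider_tree :: "'v set \<Rightarrow> ('v \<times> 'v) set \<Rightarrow> 'v \<Rightarrow> 'v \<Rightarrow> 'v set \<Rightarrow> ('v \<times> 'v) set \<Rightarrow> 'v list \<Rightarrow> bool" where
  "collider_tree V EH x y Vt Et p \<longleftrightarrow>
     Vt \<subseteq> V \<and> Et \<subseteq> EH \<and> Et \<subseteq> Vt \<times> Vt \<and>
     is_path Et p \<and> set p \<subseteq> Vt \<and> hd p = x \<and> last p = y \<and>
     (\<forall>w\<in>Vt - set p. \<exists>i. collider_at Et p i \<and> descendant Et (p!i) w)"

definition active_collider_tree :: "'v set \<Rightarrow> ('v \<times> 'v) set \<Rightarrow> 'v \<Rightarrow> 'v \<Rightarrow> 'v set \<Rightarrow> 'v set \<Rightarrow> ('v \<times> 'v) set \<Rightarrow> 'v list \<Rightarrow> bool" where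
  "active_collider_tree V EH x y Z Vt Et p \<longleftrightarrow> collider_tree V EH x y Vt Et p \<and> active Et Z p"

text \<open>noe_xy = noe_yx is represented by Noe {x,y}; (x indep y | Z) = (y indep x | Z)
  is represented by Ind {x,y} Z.\<close>
datatype 'v asm = Arr 'v 'v | Noe "'v set" | Ind "'v set" "'v set"

datatype 'v sent = Asm "'v asm" | Ctr "'v asm" | DPath 'v 'v | Edge 'v 'v

definition ds_asms :: "'v set \<Rightarrow> 'v sent set" where
  "ds_asms V =
     {Asm (Arr x y) | x y. x \<in> V \<and> y \<in> V \<and> x \<noteq> y} \<union>
     {Asm (Noe {x, y}) | x y. x \<in> V \<and> y \<in> V \<and> x \<noteq> y} \<union>
     {Asm (Ind {x, y} Z) | x y Z. Z \<subseteq> V \<and> x \<in> V - Z \<and> y \<in> V - Z \<and> x \<noteq> y}"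

fun ds_ctr :: "'v sent \<Rightarrow> 'v sent" where
  "ds_ctr (Asm a) = Ctr a"
| "ds_ctr s = s"

definition arr_body :: "('v \<times> 'v) set \<Rightarrow> 'v sent set" where
  "arr_body Et = {Asm (Arr u v) | u v. (u, v) \<in> Et}"

definition ds_rules :: "'v set \<Rightarrow> ('v sent \<times> 'v sent set) set" where
  "ds_rules V =
     \<comment> \<open>(i)\<close>
     {(Ctr a, {Asm b}) | x y a b. x \<in> V \<and> y \<in> V \<and> x \<noteq> y \<and>
        a \<in> {Arr x y, Arr y x, Noe {x, y}} \<and> b \<in> {Arr x y, Arr y x, Noe {x, y}} \<and> a \<noteq> b} \<union>
     \<comment> \<open>(ii) cycles x_1 ... x_k with x_1 = x_k\<close>
     {(Ctr (Arr (xs!i) (xs!Suc i)), {Asm (Arr (xs!j) (xs!Suc j)) | j. Suc j < length xs}) | xs i.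
        set xs \<subseteq> V \<and> xs \<noteq> [] \<and> hd xs = last xs \<and>
        (\<forall>j. Suc j < length xs \<longrightarrow> xs!j \<noteq> xs!Suc j) \<and> Suc i < length xs} \<union>
     \<comment> \<open>(iii)\<close>
     {(DPath x y, {Asm (Arr x y)}) | x y. x \<in> V \<and> y \<in> V \<and> x \<noteq> y} \<union>
     {(DPath x z, {DPath x y, Asm (Arr y z)}) | x y z. x \<in> V \<and> y \<in> V \<and> z \<in> V \<and> y \<noteq> z} \<union>
     {(Edge x y, {Asm (Arr x y)}) | x y. x \<in> V \<and> y \<in> V \<and> x \<noteq> y} \<union>
     {(Edge x y, {Asm (Arr y x)}) | x y. x \<in> V \<and> y \<in> V \<and> x \<noteq> y} \<union>
     {(Ctr (Noe {x, y}), {Edge x y}) | x y. x \<in> V \<and> y \<in> V \<and> x \<noteq> y} \<union>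
     \<comment> \<open>(iv) Z-active x-y-collider-trees of any DAG on V\<close>
     {(Ctr (Ind {x, y} Z), arr_body Et) | x y Z EH Vt Et p.
        x \<in> V \<and> y \<in> V \<and> x \<noteq> y \<and> Z \<subseteq> V - {x, y} \<and> is_dag V EH \<and>
        active_collider_tree V EH x y Z Vt Et p}"

definition graph_of :: "'v sent set \<Rightarrow> ('v \<times> 'v) set" where
  "graph_of S = {(u, v). Asm (Arr u v) \<in> S}"

end

theory Submission
  imports Defs
begin

section \<open>Generic ABA facts\<close>

lemma derivable_mono:
  assumes "derivable R As S q" "S \<subseteq> S'" shows "derivable R As S' q"
  using assms
proof (induction rule: derivable.induct)
  case (leaf q) then show ?case by (blast intro: derivable.leaf)
next
  case (rule q B) then show ?case by (blast intro: derivable.rule)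
qed

lemma attacks_mono: "attacks R As ctr S T \<Longrightarrow> S \<subseteq> S' \<Longrightarrow> T \<subseteq> T' \<Longrightarrow> attacks R As ctr S' T'"
  unfolding attacks_def by (meson derivable_mono subsetD)

lemma attacks_Un: "attacks R As ctr S (T \<union> T') \<longleftrightarrow> attacks R As ctr S T \<or> attacks R As ctr S T'"
  unfolding attacks_def by blast

lemma fundamental:
  assumes adm: "admissible R As ctr M" and def: "defends R As ctr M T" and T: "T \<subseteq> As"
  shows "admissible R As ctr (M \<union> T)"
proof -
  have MA: "M \<subseteq> As" and cf: "\<not> attacks R As ctr M M" and dM: "defends R As ctr M M"
    using adm unfolding admissible_def conflict_free_def by auto
  have dU: "defends R As ctr (M \<union> T) (M \<union> T)"
    unfolding defends_def
  proof (intro allI impI)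
    fix U assume U: "U \<subseteq> As" "attacks R As ctr U (M \<union> T)"
    then have "attacks R As ctr U M \<or> attacks R As ctr U T" using attacks_Un by blast
    then have "attacks R As ctr M U" using dM def U(1) unfolding defends_def by blast
    then show "attacks R As ctr (M \<union> T) U" using attacks_mono by blast
  qed
  have "\<not> attacks R As ctr (M \<union> T) (M \<union> T)"
  proof
    assume a: "attacks R As ctr (M \<union> T) (M \<union> T)"
    have MT: "M \<union> T \<subseteq> As" using MA T by auto
    have "attacks R As ctr (M \<union> T) M \<or> attacks R As ctr (M \<union> T) T" using a attacks_Un by blast
    moreover have "attacks R As ctr (M \<union> T) M \<longrightarrow> attacks R As ctr M (M \<union> T)"
      using dM MT unfolding defends_def by blast
    moreover have "attacks R As ctr (M \<union> T) T \<longrightarrow> attacks R As ctr M (M \<union> T)"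
      using def MT unfolding defends_def by blast
    ultimately have "attacks R As ctr M (M \<union> T)" by blast
    then have "attacks R As ctr M M \<or> attacks R As ctr M T" by (simp add: attacks_Un)
    moreover have "attacks R As ctr M T \<longrightarrow> attacks R As ctr M M"
      using def MA unfolding defends_def by blast
    ultimately show False using cf by blast
  qed
  moreover have "M \<union> T \<subseteq> As" using MA T by blast
  ultimately show ?thesis using dU unfolding admissible_def conflict_free_def by blast
qed

lemma maximal_admissible_complete:
  assumes adm: "admissible R As ctr M"
    and max: "\<forall>M'. admissible R As ctr M' \<longrightarrow> M \<subseteq> M' \<longrightarrow> M' = M"
  shows "complete_ext R As ctr M"
  unfolding complete_ext_def
proof (intro conjI allI impI)
  fix T assume "T \<subseteq> As" "defends R As ctr M T"
  then have "admissible R As ctr (M \<union> T)" using fundamental adm by blast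
  then have "M \<union> T = M" using max by (metis sup.cobounded1)
  then show "T \<subseteq> M" by blast
qed (rule adm)

lemma exists_maximal_admissible:
  assumes "finite As" "admissible R As ctr S"
  shows "\<exists>M. admissible R As ctr M \<and> S \<subseteq> M \<and> (\<forall>M'. admissible R As ctr M' \<longrightarrow> M \<subseteq> M' \<longrightarrow> M' = M)"
proof -
  let ?F = "{M. admissible R As ctr M}"
  have "?F \<subseteq> Pow As" by (auto simp: admissible_def)
  then have "finite ?F" using assms(1) finite_subset by blast
  from finite_has_maximal2[OF this, of S] assms(2)
  obtain M where "M \<in> ?F" "S \<subseteq> M" "\<forall>b\<in>?F. M \<subseteq> b \<longrightarrow> M = b" by blast
  then show ?thesis by blast
qed

section \<open>Graph facts\<close>

lemma is_path_mono: "is_path E p \<Longrightarrow> E \<subseteq> E' \<Longrightarrow> is_path E' p"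
  unfolding is_path_def by blast

lemma is_dir_path_mono: "is_dir_path E p \<Longrightarrow> E \<subseteq> E' \<Longrightarrow> is_dir_path E' p"
  unfolding is_dir_path_def by blast

lemma descendant_mono: "descendant E a b \<Longrightarrow> E \<subseteq> E' \<Longrightarrow> descendant E' a b"
  unfolding descendant_def using is_dir_path_mono by blast

lemma is_path_restrict: "is_path E p \<Longrightarrow> set p \<subseteq> A \<Longrightarrow> is_path (E \<inter> A \<times> A) p"
  unfolding is_path_def by (auto simp: subset_iff)

lemma is_dir_path_restrict: "is_dir_path E p \<Longrightarrow> set p \<subseteq> A \<Longrightarrow> is_dir_path (E \<inter> A \<times> A) p"
  unfolding is_dir_path_def by (auto simp: subset_iff)

lemma dir_path_prefix:
  assumes "is_dir_path E q" "k < length q"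
  shows "descendant E (hd q) (q!k)"
proof -
  have "is_dir_path E (take (Suc k) q)"
    using assms unfolding is_dir_path_def by auto
  moreover have "hd (take (Suc k) q) = hd q" using assms unfolding is_dir_path_def
    by (simp add: hd_take)
  moreover have "last (take (Suc k) q) = q!k" using assms
    by (subst last_conv_nth) auto
  ultimately show ?thesis unfolding descendant_def by blast
qed

lemma dir_path_set:
  assumes "is_dir_path E q" shows "set q \<subseteq> insert (hd q) (snd ` E)"
proof
  fix w assume "w \<in> set q"
  then obtain k where k: "k < length q" "q!k = w" by (auto simp: in_set_conv_nth)
  show "w \<in> insert (hd q) (snd ` E)"
  proof (cases k)
    case 0 then show ?thesis using k assms by (simp add: hd_conv_nth)
  next
    case (Suc j)
    then have "(q!j, q!Suc j) \<in> E" using k assms unfolding is_dir_path_def by blast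
    then have "q!Suc j \<in> snd ` E" by (metis image_eqI snd_conv)
    then show ?thesis using k Suc by simp
  qed
qed

lemma path_set:
  assumes "is_path E q" shows "set q \<subseteq> insert (hd q) (snd ` E \<union> fst ` E)"
proof
  fix w assume "w \<in> set q"
  then obtain k where k: "k < length q" "q!k = w" by (auto simp: in_set_conv_nth)
  show "w \<in> insert (hd q) (snd ` E \<union> fst ` E)"
  proof (cases k)
    case 0 then show ?thesis using k assms by (simp add: hd_conv_nth)
  next
    case (Suc j)
    then have "(q!j, q!Suc j) \<in> E \<or> (q!Suc j, q!j) \<in> E" using k assms unfolding is_path_def by blast
    then have "q!Suc j \<in> snd ` E \<union> fst ` E" by (metis UnI1 UnI2 image_eqI snd_conv fst_conv)
    then show ?thesis using k Suc by simp
  qed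
qed

lemma descendant_in:
  assumes "descendant E c w" shows "w \<in> insert c (snd ` E)"
proof -
  obtain q where q: "is_dir_path E q" "hd q = c" "last q = w" using assms unfolding descendant_def by blast
  then have "w \<in> set q" unfolding is_dir_path_def by auto
  then show ?thesis using dir_path_set[OF q(1)] q by auto
qed

section \<open>The framework\<close>

lemma no_rule_Asm: "(Asm a, B) \<notin> ds_rules V"
  unfolding ds_rules_def by auto

lemma rule_Edge: "(Edge x y, B) \<in> ds_rules V \<Longrightarrow> B = {Asm (Arr x y)} \<or> B = {Asm (Arr y x)}"
  unfolding ds_rules_def by auto

lemma rule_nonctr_body: "(q, B) \<in> ds_rules V \<Longrightarrow> (\<forall>a. q \<noteq> Ctr a) \<Longrightarrow> b \<in> B \<Longrightarrow> (\<forall>a. b \<noteq> Ctr a) \<and> (\<forall>N. b \<noteq> Asm (Noe N))"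
  unfolding ds_rules_def by auto

lemma rule_body_no_ctr: "(q, B) \<in> ds_rules V \<Longrightarrow> b \<in> B \<Longrightarrow> b \<noteq> Ctr a"
  unfolding ds_rules_def arr_body_def by auto

lemma rule_Ctr_Noe: "(Ctr (Noe N), B) \<in> ds_rules V \<Longrightarrow>
   \<exists>x y. N = {x,y} \<and> x \<noteq> y \<and> x \<in> V \<and> y \<in> V \<and> (B = {Edge x y} \<or> B = {Asm (Arr x y)} \<or> B = {Asm (Arr y x)})"
  unfolding ds_rules_def by auto

lemma rule_Noe_body: "(Ctr a, B) \<in> ds_rules V \<Longrightarrow> Asm (Noe N) \<in> B \<Longrightarrow>
   \<exists>x y. x \<in> V \<and> y \<in> V \<and> x \<noteq> y \<and> N = {x,y} \<and> B = {Asm (Noe N)} \<and> (a = Arr x y \<or> a = Arr y x)"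
  unfolding ds_rules_def arr_body_def by auto

lemma rule_Ctr_Ind: "(Ctr (Ind N Z), B) \<in> ds_rules V \<Longrightarrow>
   \<exists>x y EH Vt Et p. N = {x,y} \<and> B = arr_body Et \<and> x \<in> V \<and> y \<in> V \<and> x \<noteq> y \<and> Z \<subseteq> V - {x,y}
     \<and> is_dag V EH \<and> active_collider_tree V EH x y Z Vt Et p"
  unfolding ds_rules_def by auto

lemma rule_i: "x \<in> V \<Longrightarrow> y \<in> V \<Longrightarrow> x \<noteq> y \<Longrightarrow> a \<in> {Arr x y, Arr y x, Noe {x, y}} \<Longrightarrow>
   b \<in> {Arr x y, Arr y x, Noe {x, y}} \<Longrightarrow> a \<noteq> b \<Longrightarrow> (Ctr a, {Asm b}) \<in> ds_rules V"
  unfolding ds_rules_def by (intro UnI1) blast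

lemma rule_iv: "x \<in> V \<Longrightarrow> y \<in> V \<Longrightarrow> x \<noteq> y \<Longrightarrow> Z \<subseteq> V - {x,y} \<Longrightarrow> is_dag V EH \<Longrightarrow>
    active_collider_tree V EH x y Z Vt Et p \<Longrightarrow> (Ctr (Ind {x, y} Z), arr_body Et) \<in> ds_rules V"
  unfolding ds_rules_def by (intro UnI2) blast

lemma rule_ii: "set xs \<subseteq> V \<Longrightarrow> xs \<noteq> [] \<Longrightarrow> hd xs = last xs \<Longrightarrow>
        (\<forall>j. Suc j < length xs \<longrightarrow> xs!j \<noteq> xs!Suc j) \<Longrightarrow> Suc i < length xs \<Longrightarrow>
   (Ctr (Arr (xs!i) (xs!Suc i)), {Asm (Arr (xs!j) (xs!Suc j)) | j. Suc j < length xs}) \<in> ds_rules V"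
  unfolding ds_rules_def by (intro UnI1 UnI2) blast

lemma Ctr_notin_asms: "Ctr a \<notin> ds_asms V" and Edge_notin_asms: "Edge x y \<notin> ds_asms V"
  unfolding ds_asms_def by simp_all

lemma Arr_in_asms: "Asm (Arr u v) \<in> ds_asms V \<longleftrightarrow> u \<in> V \<and> v \<in> V \<and> u \<noteq> v"
  unfolding ds_asms_def by simp

lemma Noe_in_asms: "u \<in> V \<Longrightarrow> v \<in> V \<Longrightarrow> u \<noteq> v \<Longrightarrow> Asm (Noe {u,v}) \<in> ds_asms V"
  unfolding ds_asms_def by (intro UnI1 UnI2) blast

lemma Ind_in_asms: "x \<in> V \<Longrightarrow> y \<in> V \<Longrightarrow> x \<noteq> y \<Longrightarrow> Z \<subseteq> V - {x,y} \<Longrightarrow> Asm (Ind {x,y} Z) \<in> ds_asms V"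
  unfolding ds_asms_def by (intro UnI2) blast

lemma deriv_Asm: "derivable (ds_rules V) As S (Asm a) \<Longrightarrow> Asm a \<in> S"
  by (erule derivable.cases) (auto simp: no_rule_Asm)

lemma deriv_Edge: assumes "derivable (ds_rules V) (ds_asms V) S (Edge x y)"
  shows "Asm (Arr x y) \<in> S \<or> Asm (Arr y x) \<in> S"
  using assms
proof cases
  case leaf then show ?thesis by (simp add: Edge_notin_asms)
next
  case (rule B)
  from rule_Edge[OF rule(1)] show ?thesis
  proof
    assume "B = {Asm (Arr x y)}"
    then have "derivable (ds_rules V) (ds_asms V) S (Asm (Arr x y))" using rule(3) by simp
    then show ?thesis using deriv_Asm by blast
  next
    assume "B = {Asm (Arr y x)}"
    then have "derivable (ds_rules V) (ds_asms V) S (Asm (Arr y x))" using rule(3) by simp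
    then show ?thesis using deriv_Asm by blast
  qed
qed

lemma deriv_Ctr: "derivable (ds_rules V) (ds_asms V) S (Ctr a) \<Longrightarrow>
   \<exists>B. (Ctr a, B) \<in> ds_rules V \<and> (\<forall>b\<in>B. derivable (ds_rules V) (ds_asms V) S b)"
  by (erule derivable.cases) (auto simp: Ctr_notin_asms)

lemma deriv_Ctr_Noe: assumes "derivable (ds_rules V) (ds_asms V) S (Ctr (Noe {u,v}))"
  shows "Asm (Arr u v) \<in> S \<or> Asm (Arr v u) \<in> S"
proof -
  obtain B where B: "(Ctr (Noe {u,v}), B) \<in> ds_rules V" "\<forall>b\<in>B. derivable (ds_rules V) (ds_asms V) S b"
    using deriv_Ctr[OF assms] by blast
  obtain x y where xy: "{u,v} = {x,y}" "B = {Edge x y} \<or> B = {Asm (Arr x y)} \<or> B = {Asm (Arr y x)}"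
    using rule_Ctr_Noe[OF B(1)] by blast
  have "Asm (Arr x y) \<in> S \<or> Asm (Arr y x) \<in> S"
    using xy(2)
  proof (elim disjE)
    assume "B = {Edge x y}" then show ?thesis using B(2) deriv_Edge by simp
  next
    assume "B = {Asm (Arr x y)}"
    then have "derivable (ds_rules V) (ds_asms V) S (Asm (Arr x y))" using B(2) by simp
    then show ?thesis using deriv_Asm by blast
  next
    assume "B = {Asm (Arr y x)}"
    then have "derivable (ds_rules V) (ds_asms V) S (Asm (Arr y x))" using B(2) by simp
    then show ?thesis using deriv_Asm by blast
  qed
  moreover have "(x = u \<and> y = v) \<or> (x = v \<and> y = u)" using xy(1) by (metis doubleton_eq_iff)
  ultimately show ?thesis by blast
qed

lemma derive_rule1:
  assumes "(q, {b}) \<in> ds_rules V" "b \<in> S" "b \<in> ds_asms V"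
  shows "derivable (ds_rules V) (ds_asms V) S q"
  by (rule derivable.rule[OF assms(1)]) (simp_all add: derivable.leaf assms(2,3))

lemma derive_rule_set:
  assumes "(q, B) \<in> ds_rules V" "finite B" "B \<subseteq> S" "S \<subseteq> ds_asms V"
  shows "derivable (ds_rules V) (ds_asms V) S q"
  by (rule derivable.rule[OF assms(1,2)]) (meson assms(3,4) derivable.leaf subsetD)

lemma finite_asms: assumes "finite V" shows "finite (ds_asms V)"
proof -
  let ?X = "(\<lambda>(x,y). Asm (Arr x y)) ` (V \<times> V) \<union> (\<lambda>(x,y). Asm (Noe {x,y})) ` (V \<times> V)
     \<union> (\<lambda>(x,y,Z). Asm (Ind {x,y} Z)) ` (V \<times> V \<times> Pow V)"
  have "ds_asms V \<subseteq> ?X"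
  proof
    fix s assume "s \<in> ds_asms V"
    then consider (a) x y where "s = Asm (Arr x y)" "x \<in> V" "y \<in> V"
      | (b) x y where "s = Asm (Noe {x,y})" "x \<in> V" "y \<in> V"
      | (c) x y Z where "s = Asm (Ind {x,y} Z)" "x \<in> V" "y \<in> V" "Z \<subseteq> V"
      unfolding ds_asms_def by blast
    then show "s \<in> ?X"
    proof cases
      case a
      then have "s \<in> (\<lambda>(x,y). Asm (Arr x y)) ` (V \<times> V)" by (intro rev_image_eqI[of "(x,y)"]) auto
      then show ?thesis by blast
    next
      case b
      then have "s \<in> (\<lambda>(x,y). Asm (Noe {x,y})) ` (V \<times> V)" by (intro rev_image_eqI[of "(x,y)"]) auto
      then show ?thesis by blast
    next
      case c
      then have "s \<in> (\<lambda>(x,y,Z). Asm (Ind {x,y} Z)) ` (V \<times> V \<times> Pow V)" by (intro rev_image_eqI[of "(x,y,Z)"]) auto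
      then show ?thesis by blast
    qed
  qed
  moreover have "finite ?X" using assms by simp
  ultimately show ?thesis using finite_subset by blast
qed

lemma noe_free:
  assumes "derivable (ds_rules V) (ds_asms V) (insert n S) q" "n = Asm (Noe N0)"
  shows "(\<forall>a. q \<noteq> Ctr a) \<longrightarrow> (\<forall>N. q \<noteq> Asm (Noe N)) \<longrightarrow> derivable (ds_rules V) (ds_asms V) S q"
  using assms(1)
proof (induction rule: derivable.induct)
  case (leaf q)
  show ?case
  proof (intro impI)
    assume h: "\<forall>N. q \<noteq> Asm (Noe N)"
    then have "q \<noteq> n" using assms(2) by simp
    then have "q \<in> S" using leaf.hyps(1) by simp
    then show "derivable (ds_rules V) (ds_asms V) S q" using leaf.hyps(2) by (rule derivable.leaf)
  qed
next
  case (rule q B)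
  show ?case
  proof (intro impI)
    assume nq: "\<forall>a. q \<noteq> Ctr a"
    have "\<forall>b\<in>B. derivable (ds_rules V) (ds_asms V) S b"
    proof
      fix b assume b: "b \<in> B"
      have nb: "(\<forall>a. b \<noteq> Ctr a) \<and> (\<forall>N. b \<noteq> Asm (Noe N))" using rule_nonctr_body[OF rule.hyps(1) nq b] .
      from rule.IH b have "(\<forall>a. b \<noteq> Ctr a) \<longrightarrow> (\<forall>N. b \<noteq> Asm (Noe N)) \<longrightarrow> derivable (ds_rules V) (ds_asms V) S b" by blast
      with nb show "derivable (ds_rules V) (ds_asms V) S b" by blast
    qed
    then show "derivable (ds_rules V) (ds_asms V) S q" by (rule derivable.rule[OF rule.hyps(1,2)])
  qed
qed

lemma asms_Asm: "s \<in> ds_asms V \<Longrightarrow> \<exists>a. s = Asm a"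
  unfolding ds_asms_def by blast

lemma deriv_Ctr': "derivable (ds_rules V) (ds_asms V) S (Ctr a) \<Longrightarrow>
   \<exists>B. (Ctr a, B) \<in> ds_rules V \<and> finite B \<and> (\<forall>b\<in>B. derivable (ds_rules V) (ds_asms V) S b)"
  by (erule derivable.cases) (simp add: Ctr_notin_asms, blast)

lemma extend_noe_admissible:
  assumes adm: "admissible (ds_rules V) (ds_asms V) ds_ctr S"
    and uv: "u \<in> V" "v \<in> V" "u \<noteq> v"
    and n1: "Asm (Arr u v) \<notin> S" "Asm (Arr v u) \<notin> S"
  shows "admissible (ds_rules V) (ds_asms V) ds_ctr (insert (Asm (Noe {u,v})) S)"
proof -
  let ?R = "ds_rules V" and ?A = "ds_asms V" and ?n = "Asm (Noe {u,v})"
  let ?S' = "insert ?n S"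
  have adm': "S \<subseteq> ?A \<and> \<not> attacks ?R ?A ds_ctr S S \<and> defends ?R ?A ds_ctr S S"
    using adm unfolding admissible_def conflict_free_def .
  have SA: "S \<subseteq> ?A" using adm' by (rule conjunct1)
  have cf: "\<not> attacks ?R ?A ds_ctr S S" using adm' by (metis conjunct1 conjunct2)
  have dS: "defends ?R ?A ds_ctr S S" using adm' by (metis conjunct2)
  have nA: "?n \<in> ?A" by (rule Noe_in_asms[OF uv])
  have S'A: "?S' \<subseteq> ?A" using SA nA by simp
  have n1': "Asm (Arr u v) \<notin> ?S'" "Asm (Arr v u) \<notin> ?S'" using n1 by simp_all
  have cf': "\<not> attacks ?R ?A ds_ctr ?S' ?S'"
  proof
    assume "attacks ?R ?A ds_ctr ?S' ?S'"
    then obtain s where s: "s \<in> ?S'" "derivable ?R ?A ?S' (ds_ctr s)" unfolding attacks_def by blast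
    have "s \<in> ?A" using s(1) S'A by (rule subsetD[rotated])
    then obtain a where a: "s = Asm a" using asms_Asm by blast
    have da: "derivable ?R ?A ?S' (Ctr a)" using s(2) a by simp
    show False
    proof (cases "s = ?n")
      case True
      then have "a = Noe {u,v}" using a by simp
      then have "Asm (Arr u v) \<in> ?S' \<or> Asm (Arr v u) \<in> ?S'" using deriv_Ctr_Noe[of V ?S' u v] da by simp
      then show False using n1' by simp
    next
      case False
      then have sS: "s \<in> S" using s(1) by blast
      obtain B where B: "(Ctr a, B) \<in> ?R" "finite B" "\<forall>b\<in>B. derivable ?R ?A ?S' b"
        using deriv_Ctr'[OF da] by blast
      show False
      proof (cases "\<exists>N. Asm (Noe N) \<in> B")
        case True
        then obtain N where N: "Asm (Noe N) \<in> B" by blast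
        obtain x y where xy: "x \<in> V" "y \<in> V" "x \<noteq> y" "N = {x,y}" "B = {Asm (Noe N)}" "a = Arr x y \<or> a = Arr y x"
          using rule_Noe_body[OF B(1) N] by blast
        have "Asm (Noe N) \<in> ?S'" using deriv_Asm B(3) N by blast
        show False
        proof (cases "Asm (Noe N) \<in> S")
          case True
          have "(Ctr a, {Asm (Noe N)}) \<in> ?R" using B(1) xy(5) by simp
          then have "derivable ?R ?A S (Ctr a)" using derive_rule1 True SA by blast
          then have "attacks ?R ?A ds_ctr S S" unfolding attacks_def using sS a by force
          then show False using cf by blast
        next
          case False
          then have "N = {u,v}" using \<open>Asm (Noe N) \<in> ?S'\<close> by simp
          then have "(x = u \<and> y = v) \<or> (x = v \<and> y = u)" using xy(4) by (metis doubleton_eq_iff)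
          then show False using xy(6) sS a n1 by blast
        qed
      next
        case False
        have "\<forall>b\<in>B. derivable ?R ?A S b"
        proof
          fix b assume b: "b \<in> B"
          have "\<forall>a. b \<noteq> Ctr a" using rule_body_no_ctr[OF B(1) b] by blast
          moreover have "\<forall>N. b \<noteq> Asm (Noe N)" using False b by blast
          ultimately show "derivable ?R ?A S b"
            using noe_free[of V ?n S b "{u,v}"] B(3) b by blast
        qed
        then have "derivable ?R ?A S (Ctr a)" by (rule derivable.rule[OF B(1,2)])
        then have "attacks ?R ?A ds_ctr S S" unfolding attacks_def using sS a by force
        then show False using cf by blast
      qed
    qed
  qed
  have def': "defends ?R ?A ds_ctr ?S' ?S'"
    unfolding defends_def
  proof (intro allI impI)
    fix U assume U: "U \<subseteq> ?A" "attacks ?R ?A ds_ctr U ?S'"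
    then have "attacks ?R ?A ds_ctr U S \<or> derivable ?R ?A U (Ctr (Noe {u,v}))"
      unfolding attacks_def by (simp add: disj_commute)
    then show "attacks ?R ?A ds_ctr ?S' U"
    proof
      assume "attacks ?R ?A ds_ctr U S"
      then have "attacks ?R ?A ds_ctr S U" by (rule dS[unfolded defends_def, rule_format, OF U(1)])
      moreover have "S \<subseteq> ?S'" by (rule subset_insertI)
      ultimately show ?thesis by (rule attacks_mono) simp
    next
      assume "derivable ?R ?A U (Ctr (Noe {u,v}))"
      then have "Asm (Arr u v) \<in> U \<or> Asm (Arr v u) \<in> U" by (rule deriv_Ctr_Noe)
      then show ?thesis
      proof
        assume h: "Asm (Arr u v) \<in> U"
        have "(Ctr (Arr u v), {?n}) \<in> ?R" using rule_i[of u V v "Arr u v" "Noe {u,v}"] uv by simp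
        then have "derivable ?R ?A ?S' (Ctr (Arr u v))" using derive_rule1 nA by blast
        then show ?thesis unfolding attacks_def using h by force
      next
        assume h: "Asm (Arr v u) \<in> U"
        have "(Ctr (Arr v u), {?n}) \<in> ?R" using rule_i[of u V v "Arr v u" "Noe {u,v}"] uv by simp
        then have "derivable ?R ?A ?S' (Ctr (Arr v u))" using derive_rule1 nA by blast
        then show ?thesis unfolding attacks_def using h by force
      qed
    qed
  qed
  show ?thesis unfolding admissible_def conflict_free_def using S'A cf' def' by blast
qed


lemma attack_by: "derivable R As S (Ctr a) \<Longrightarrow> Asm a \<in> T \<Longrightarrow> attacks R As ds_ctr S T"
  unfolding attacks_def by (intro bexI[of _ "Asm a"]) simp_all

lemma preferred_decided:
  assumes fin: "finite V" and pref: "preferred_ext (ds_rules V) (ds_asms V) ds_ctr S"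
    and uv: "u \<in> V" "v \<in> V" "u \<noteq> v"
  shows "Asm (Arr u v) \<in> S \<or> Asm (Arr v u) \<in> S \<or> Asm (Noe {u,v}) \<in> S"
proof (rule ccontr)
  let ?R = "ds_rules V" and ?A = "ds_asms V" and ?n = "Asm (Noe {u,v})"
  assume "\<not> (Asm (Arr u v) \<in> S \<or> Asm (Arr v u) \<in> S \<or> ?n \<in> S)"
  then have n: "Asm (Arr u v) \<notin> S" "Asm (Arr v u) \<notin> S" "?n \<notin> S" by simp_all
  have compl: "complete_ext ?R ?A ds_ctr S" and nomax: "\<not> (\<exists>S'. complete_ext ?R ?A ds_ctr S' \<and> S \<subset> S')"
    using pref unfolding preferred_ext_def by simp_all
  have adm: "admissible ?R ?A ds_ctr S" using compl unfolding complete_ext_def by simp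
  have adm': "admissible ?R ?A ds_ctr (insert ?n S)"
    by (rule extend_noe_admissible[OF adm uv n(1,2)])
  obtain M where M: "admissible ?R ?A ds_ctr M" "insert ?n S \<subseteq> M"
     "\<forall>M'. admissible ?R ?A ds_ctr M' \<longrightarrow> M \<subseteq> M' \<longrightarrow> M' = M"
    using exists_maximal_admissible[OF finite_asms[OF fin] adm'] by blast
  have "complete_ext ?R ?A ds_ctr M" by (rule maximal_admissible_complete[OF M(1) M(3)])
  moreover have "S \<subset> M" using M(2) n(3) by blast
  ultimately show False using nomax by blast
qed

lemma trancl_list:
  assumes "(a, b) \<in> E\<^sup>+"
  shows "\<exists>xs. 2 \<le> length xs \<and> hd xs = a \<and> last xs = b \<and> (\<forall>j. Suc j < length xs \<longrightarrow> (xs!j, xs!Suc j) \<in> E)"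
  using assms
proof (induction rule: converse_trancl_induct)
  case (base y)
  show ?case by (rule exI[of _ "[y, b]"]) (simp add: base less_Suc_eq)
next
  case (step y z)
  then obtain xs where xs: "2 \<le> length xs" "hd xs = z" "last xs = b" "\<forall>j. Suc j < length xs \<longrightarrow> (xs!j, xs!Suc j) \<in> E"
    by blast
  have "\<forall>j. Suc j < length (y # xs) \<longrightarrow> ((y#xs)!j, (y#xs)!Suc j) \<in> E"
  proof (intro allI impI)
    fix j assume j: "Suc j < length (y # xs)"
    show "((y#xs)!j, (y#xs)!Suc j) \<in> E"
    proof (cases j)
      case 0
      have "xs ! 0 = z" using xs(1,2) by (cases xs) auto
      then show ?thesis using 0 step.hyps(1) by simp
    next
      case (Suc k)
      then show ?thesis using xs(4) j by simp
    qed
  qed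
  moreover have "last (y # xs) = b" using xs(1,3) by auto
  ultimately show ?case using xs(1) by (intro exI[of _ "y # xs"]) simp
qed

lemma graph_mem: "S \<subseteq> ds_asms V \<Longrightarrow> (u, v) \<in> graph_of S \<Longrightarrow> u \<in> V \<and> v \<in> V \<and> u \<noteq> v"
proof -
  assume SA: "S \<subseteq> ds_asms V" and e: "(u, v) \<in> graph_of S"
  then have "Asm (Arr u v) \<in> S" unfolding graph_of_def by simp
  then have "Asm (Arr u v) \<in> ds_asms V" using SA by (rule subsetD[rotated])
  then show ?thesis by (rule Arr_in_asms[THEN iffD1])
qed

lemma graph_sub: assumes "S \<subseteq> ds_asms V" shows "graph_of S \<subseteq> V \<times> V"
proof (rule subrelI)
  fix u v assume "(u,v) \<in> graph_of S"
  then have "u \<in> V \<and> v \<in> V \<and> u \<noteq> v" by (rule graph_mem[OF assms])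
  then show "(u,v) \<in> V \<times> V" by simp
qed

lemma graph_irrefl: assumes "S \<subseteq> ds_asms V" "(u, v) \<in> graph_of S" shows "u \<noteq> v"
proof -
  have "u \<in> V \<and> v \<in> V \<and> u \<noteq> v" by (rule graph_mem[OF assms])
  then show ?thesis by simp
qed

lemma graph_acyclic:
  assumes SA: "S \<subseteq> ds_asms V" and cf: "\<not> attacks (ds_rules V) (ds_asms V) ds_ctr S S"
  shows "acyclic (graph_of S)"
  unfolding acyclic_def
proof (intro allI notI)
  let ?G = "graph_of S"
  fix a assume aa: "(a, a) \<in> ?G\<^sup>+"
  obtain xs where xs: "2 \<le> length xs" "hd xs = a" "last xs = a" "\<forall>j. Suc j < length xs \<longrightarrow> (xs!j, xs!Suc j) \<in> ?G"
    using trancl_list[OF aa] by (elim exE conjE)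
  have ne: "xs \<noteq> []" using xs(1) by auto
  have G: "?G \<subseteq> V \<times> V" by (rule graph_sub[OF SA])
  have e0: "(xs!0, xs!Suc 0) \<in> ?G" using xs(1,4) by simp
  have setV: "set xs \<subseteq> V"
  proof
    fix w assume "w \<in> set xs"
    then obtain k where k: "k < length xs" "xs!k = w" by (auto simp: in_set_conv_nth)
    show "w \<in> V"
    proof (cases "Suc k < length xs")
      case True
      then have "(xs!k, xs!Suc k) \<in> ?G" using xs(4) by blast
      then have "(xs!k, xs!Suc k) \<in> V \<times> V" using G by (rule subsetD[rotated])
      then show ?thesis using k(2) by simp
    next
      case False
      then have "k = length xs - 1" using k(1) by simp
      then have "w = last xs" using k ne by (simp add: last_conv_nth)
      also have "... = hd xs" using xs(2,3) by simp
      also have "... = xs!0" using ne by (rule hd_conv_nth)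
      finally have "w = xs!0" .
      moreover have "(xs!0, xs!Suc 0) \<in> V \<times> V" using e0 G by (rule subsetD[rotated])
      ultimately show ?thesis by simp
    qed
  qed
  have hl: "hd xs = last xs" using xs by simp
  have dist: "\<forall>j. Suc j < length xs \<longrightarrow> xs!j \<noteq> xs!Suc j"
  proof (intro allI impI)
    fix j assume "Suc j < length xs"
    then have "(xs!j, xs!Suc j) \<in> ?G" using xs(4) by simp
    then show "xs!j \<noteq> xs!Suc j" by (rule graph_irrefl[OF SA])
  qed
  have r: "(Ctr (Arr (xs!0) (xs!Suc 0)), {Asm (Arr (xs!j) (xs!Suc j)) | j. Suc j < length xs}) \<in> ds_rules V"
  proof (rule rule_ii[OF setV ne hl dist])
    show "Suc 0 < length xs" using xs(1) by simp
  qed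
  have "finite {j. Suc j < length xs}" by (rule finite_subset[where B="{..<length xs}"]) auto
  then have fin: "finite {Asm (Arr (xs!j) (xs!Suc j)) | j. Suc j < length xs}"
    by (rule finite_image_set)
  have sub: "{Asm (Arr (xs!j) (xs!Suc j)) | j. Suc j < length xs} \<subseteq> S"
  proof
    fix s assume "s \<in> {Asm (Arr (xs!j) (xs!Suc j)) | j. Suc j < length xs}"
    then obtain j where j: "s = Asm (Arr (xs!j) (xs!Suc j))" "Suc j < length xs" by blast
    then have "(xs!j, xs!Suc j) \<in> ?G" using xs(4) by blast
    then show "s \<in> S" using j(1) unfolding graph_of_def by simp
  qed
  have "derivable (ds_rules V) (ds_asms V) S (Ctr (Arr (xs!0) (xs!Suc 0)))"
    by (rule derive_rule_set[OF r fin sub SA])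
  moreover have "Asm (Arr (xs!0) (xs!Suc 0)) \<in> S" using e0 unfolding graph_of_def by simp
  ultimately have "attacks (ds_rules V) (ds_asms V) ds_ctr S S" by (rule attack_by)
  then show False using cf by (rule notE[rotated])
qed


lemma tree_to_path:
  assumes act: "active_collider_tree V EH x y Z Vt Et p" and sub: "Et \<subseteq> G"
    and asym: "\<forall>u v. (u,v) \<in> G \<longrightarrow> (v,u) \<notin> G"
  shows "is_path G p \<and> hd p = x \<and> last p = y \<and> active G Z p"
proof -
  have pE: "is_path Et p" and hl: "hd p = x" "last p = y" and aE: "active Et Z p"
    using act unfolding active_collider_tree_def collider_tree_def by simp_all
  have pG: "is_path G p" using pE sub by (rule is_path_mono)
  have ceq: "collider_at G p i \<longleftrightarrow> collider_at Et p i" for i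
  proof
    assume c: "collider_at G p i"
    then have i: "0 < i" "Suc i < length p" and e1: "(p!(i-1), p!i) \<in> G" and e2: "(p!Suc i, p!i) \<in> G"
      unfolding collider_at_def by simp_all
    have "Suc (i-1) < length p" using i by simp
    then have "(p!(i-1), p!Suc (i-1)) \<in> Et \<or> (p!Suc (i-1), p!(i-1)) \<in> Et"
      using pE unfolding is_path_def by blast
    moreover have "Suc (i-1) = i" using i by simp
    ultimately have "(p!(i-1), p!i) \<in> Et \<or> (p!i, p!(i-1)) \<in> Et" by simp
    moreover have "(p!i, p!(i-1)) \<notin> G" using asym e1 by blast
    ultimately have f1: "(p!(i-1), p!i) \<in> Et" using sub by blast
    have "(p!i, p!Suc i) \<in> Et \<or> (p!Suc i, p!i) \<in> Et"
      using pE i(2) unfolding is_path_def by blast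
    moreover have "(p!i, p!Suc i) \<notin> G" using asym e2 by blast
    ultimately have f2: "(p!Suc i, p!i) \<in> Et" using sub by blast
    show "collider_at Et p i" unfolding collider_at_def using i f1 f2 by simp
  next
    assume "collider_at Et p i"
    then show "collider_at G p i" using sub unfolding collider_at_def by blast
  qed
  have "active G Z p"
    unfolding active_def
  proof (intro allI impI)
    fix i assume i: "i < length p"
    have a: "(collider_at Et p i \<longrightarrow> (p!i \<in> Z \<or> (\<exists>z\<in>Z. descendant Et (p!i) z))) \<and>
     (\<not> collider_at Et p i \<longrightarrow> p!i \<notin> Z)" using aE i unfolding active_def by blast
    have "collider_at G p i \<longrightarrow> (p!i \<in> Z \<or> (\<exists>z\<in>Z. descendant G (p!i) z))"
      using a ceq descendant_mono[OF _ sub] by blast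
    moreover have "\<not> collider_at G p i \<longrightarrow> p!i \<notin> Z" using a ceq by blast
    ultimately show "(collider_at G p i \<longrightarrow> (p!i \<in> Z \<or> (\<exists>z\<in>Z. descendant G (p!i) z))) \<and>
     (\<not> collider_at G p i \<longrightarrow> p!i \<notin> Z)" by (rule conjI)
  qed
  then show ?thesis using pG hl by simp
qed

lemma path_rev: assumes "is_path E p" shows "is_path E (rev p)"
  unfolding is_path_def
proof (intro conjI allI impI)
  show "rev p \<noteq> []" "distinct (rev p)" using assms unfolding is_path_def by simp_all
  fix i assume i: "Suc i < length (rev p)"
  let ?n = "length p"
  let ?j = "?n - 2 - i"
  have j: "Suc ?j < ?n" using i by simp
  have "(p!?j, p!Suc ?j) \<in> E \<or> (p!Suc ?j, p!?j) \<in> E" using assms j unfolding is_path_def by blast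
  moreover have eq: "?n - Suc i = Suc ?j" using i by simp
  moreover have "rev p ! i = p ! Suc ?j" using i eq by (simp add: rev_nth)
  moreover have "rev p ! Suc i = p ! ?j" using i by (simp add: rev_nth)
  ultimately show "(rev p ! i, rev p ! Suc i) \<in> E \<or> (rev p ! Suc i, rev p ! i) \<in> E" by auto
qed

lemma collider_rev1:
  assumes c: "collider_at E p j"
  shows "collider_at E (rev p) (length p - 1 - j)"
proof -
  let ?n = "length p" let ?i = "length p - 1 - j"
  have j: "0 < j" "Suc j < ?n" and e1: "(p!(j-1), p!j) \<in> E" and e2: "(p!Suc j, p!j) \<in> E"
    using c unfolding collider_at_def by simp_all
  have i: "0 < ?i" "Suc ?i < ?n" using j by simp_all
  have r1: "rev p ! (?i - 1) = p ! Suc j" using j by (simp add: rev_nth)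
  have r2: "rev p ! ?i = p ! j" using j by (simp add: rev_nth)
  have eq: "?n - Suc (Suc ?i) = j - 1" using j by simp
  have r3: "rev p ! Suc ?i = p ! (j - 1)" using j eq by (simp add: rev_nth)
  show ?thesis unfolding collider_at_def using i r1 r2 r3 e1 e2 by simp
qed

lemma collider_rev:
  assumes i: "i < length p"
  shows "collider_at E (rev p) i \<longleftrightarrow> collider_at E p (length p - 1 - i)"
proof
  assume "collider_at E (rev p) i"
  from collider_rev1[OF this] show "collider_at E p (length p - 1 - i)" by simp
next
  assume "collider_at E p (length p - 1 - i)"
  from collider_rev1[OF this] show "collider_at E (rev p) i" using i by simp
qed

lemma active_rev:
  assumes a: "active E Z p" shows "active E Z (rev p)"
  unfolding active_def
proof (intro allI impI)
  fix i assume i: "i < length (rev p)"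
  let ?j = "length p - 1 - i"
  have j: "?j < length p" using i by simp
  have r: "rev p ! i = p ! ?j" using i by (simp add: rev_nth)
  have "(collider_at E p ?j \<longrightarrow> (p!?j \<in> Z \<or> (\<exists>z\<in>Z. descendant E (p!?j) z))) \<and>
     (\<not> collider_at E p ?j \<longrightarrow> p!?j \<notin> Z)" using a j unfolding active_def by blast
  moreover have "collider_at E (rev p) i \<longleftrightarrow> collider_at E p ?j" using i by (simp add: collider_rev)
  ultimately show "(collider_at E (rev p) i \<longrightarrow> (rev p ! i \<in> Z \<or> (\<exists>z\<in>Z. descendant E (rev p ! i) z))) \<and>
     (\<not> collider_at E (rev p) i \<longrightarrow> rev p ! i \<notin> Z)" using r by simp
qed

lemma connected_sym:
  assumes "is_path E p" "hd p = x" "last p = y" "active E Z p"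
  shows "\<not> d_separated E y x Z"
proof -
  have ne: "p \<noteq> []" using assms(1) unfolding is_path_def by simp
  have "is_path E (rev p)" using assms(1) by (rule path_rev)
  moreover have "hd (rev p) = y" using ne assms(3) by (simp add: hd_rev)
  moreover have "last (rev p) = x" using ne assms(2) by (simp add: last_rev)
  moreover have "active E Z (rev p)" using assms(4) by (rule active_rev)
  ultimately show ?thesis unfolding d_separated_def by blast
qed


lemma path_to_tree:
  assumes pG: "is_path G p" and hl: "hd p = x" "last p = y" and aG: "active G Z p"
    and GV: "G \<subseteq> V \<times> V" and xV: "x \<in> V"
  shows "\<exists>Vt Et. active_collider_tree V G x y Z Vt Et p \<and> Et \<subseteq> G"
proof -
  define Vt where "Vt = set p \<union> {w. \<exists>i. collider_at G p i \<and> descendant G (p!i) w}"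
  define Et where "Et = G \<inter> Vt \<times> Vt"
  have setp: "set p \<subseteq> Vt" unfolding Vt_def by blast
  have EtG: "Et \<subseteq> G" unfolding Et_def by blast
  have desc: "descendant Et (p!i) w" if c: "collider_at G p i" and d: "descendant G (p!i) w" for i w
  proof -
    obtain q where q: "is_dir_path G q" "hd q = p!i" "last q = w" using d unfolding descendant_def by blast
    have "set q \<subseteq> Vt"
    proof
      fix v assume "v \<in> set q"
      then obtain k where k: "k < length q" "q!k = v" by (auto simp: in_set_conv_nth)
      have "descendant G (hd q) (q!k)" by (rule dir_path_prefix[OF q(1) k(1)])
      then have "descendant G (p!i) v" using q(2) k(2) by simp
      then show "v \<in> Vt" unfolding Vt_def using c by blast
    qed
    then have "is_dir_path (G \<inter> Vt \<times> Vt) q" by (rule is_dir_path_restrict[OF q(1)])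
    then have "is_dir_path Et q" unfolding Et_def .
    then show ?thesis unfolding descendant_def using q(2,3) by blast
  qed
  have ceq: "collider_at Et p i \<longleftrightarrow> collider_at G p i" for i
  proof
    assume "collider_at Et p i"
    then show "collider_at G p i" using EtG unfolding collider_at_def by blast
  next
    assume c: "collider_at G p i"
    then have i: "0 < i" "Suc i < length p" and e1: "(p!(i-1), p!i) \<in> G" and e2: "(p!Suc i, p!i) \<in> G"
      unfolding collider_at_def by simp_all
    have m: "p!(i-1) \<in> Vt" "p!i \<in> Vt" "p!Suc i \<in> Vt" using i setp by (simp_all add: subset_iff)
    have "(p!(i-1), p!i) \<in> Et" "(p!Suc i, p!i) \<in> Et" unfolding Et_def using e1 e2 m by simp_all
    then show "collider_at Et p i" unfolding collider_at_def using i by simp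
  qed
  have pV: "set p \<subseteq> V"
  proof
    fix w assume "w \<in> set p"
    then have "w \<in> insert (hd p) (snd ` G \<union> fst ` G)" using path_set[OF pG] by blast
    then show "w \<in> V" using GV hl(1) xV by auto
  qed
  have VtV: "Vt \<subseteq> V"
  proof
    fix w assume "w \<in> Vt"
    then consider "w \<in> set p" | i where "collider_at G p i" "descendant G (p!i) w" unfolding Vt_def by blast
    then show "w \<in> V"
    proof cases
      case 1 then show ?thesis using pV by blast
    next
      case 2
      then have "p!i \<in> set p" unfolding collider_at_def by simp
      then have "p!i \<in> V" using pV by blast
      moreover have "w \<in> insert (p!i) (snd ` G)" using descendant_in[OF 2(2)] .
      ultimately show ?thesis using GV by auto
    qed
  qed
  have pEt: "is_path Et p" unfolding Et_def by (rule is_path_restrict[OF pG setp])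
  have rest: "\<forall>w\<in>Vt - set p. \<exists>i. collider_at Et p i \<and> descendant Et (p!i) w"
  proof
    fix w assume "w \<in> Vt - set p"
    then obtain i where i: "collider_at G p i" "descendant G (p!i) w" unfolding Vt_def by blast
    then show "\<exists>i. collider_at Et p i \<and> descendant Et (p!i) w" using ceq desc by blast
  qed
  have EtV: "Et \<subseteq> Vt \<times> Vt" unfolding Et_def by blast
  have ct: "collider_tree V G x y Vt Et p"
    unfolding collider_tree_def using VtV EtG EtV pEt setp hl rest by blast
  have aEt: "active Et Z p"
    unfolding active_def
  proof (intro allI impI)
    fix i assume i: "i < length p"
    have a: "(collider_at G p i \<longrightarrow> (p!i \<in> Z \<or> (\<exists>z\<in>Z. descendant G (p!i) z))) \<and>
     (\<not> collider_at G p i \<longrightarrow> p!i \<notin> Z)" using aG i unfolding active_def by blast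
    have "collider_at Et p i \<longrightarrow> (p!i \<in> Z \<or> (\<exists>z\<in>Z. descendant Et (p!i) z))"
      using a ceq desc by blast
    moreover have "\<not> collider_at Et p i \<longrightarrow> p!i \<notin> Z" using a ceq by blast
    ultimately show "(collider_at Et p i \<longrightarrow> (p!i \<in> Z \<or> (\<exists>z\<in>Z. descendant Et (p!i) z))) \<and>
     (\<not> collider_at Et p i \<longrightarrow> p!i \<notin> Z)" by (rule conjI)
  qed
  have "active_collider_tree V G x y Z Vt Et p" unfolding active_collider_tree_def using ct aEt by blast
  then show ?thesis using EtG by blast
qed


lemma arr_body_image: "arr_body Et = (\<lambda>(u,v). Asm (Arr u v)) ` Et"
  unfolding arr_body_def by auto

lemma ind_attack_edge:
  assumes d: "derivable (ds_rules V) (ds_asms V) U (Ctr (Ind {x,y} Z))"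
    and ds: "d_separated G x y Z" and asym: "\<forall>u v. (u,v) \<in> G \<longrightarrow> (v,u) \<notin> G"
  shows "\<exists>u v. Asm (Arr u v) \<in> U \<and> (u,v) \<notin> G \<and> u \<in> V \<and> v \<in> V \<and> u \<noteq> v"
proof -
  obtain B where B: "(Ctr (Ind {x,y} Z), B) \<in> ds_rules V" "finite B" "\<forall>b\<in>B. derivable (ds_rules V) (ds_asms V) U b"
    using deriv_Ctr'[OF d] by blast
  obtain x' y' EH Vt Et p where r: "{x,y} = {x',y'}" "B = arr_body Et" "x' \<in> V" "y' \<in> V" "x' \<noteq> y'" "Z \<subseteq> V - {x',y'}"
     "is_dag V EH" "active_collider_tree V EH x' y' Z Vt Et p"
    using rule_Ctr_Ind[OF B(1)] by blast
  have inU: "Asm (Arr u v) \<in> U" if "(u,v) \<in> Et" for u v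
  proof -
    have "Asm (Arr u v) \<in> B" using that r(2) unfolding arr_body_def by blast
    then have "derivable (ds_rules V) (ds_asms V) U (Asm (Arr u v))" using B(3) by blast
    then show ?thesis by (rule deriv_Asm)
  qed
  have EtEH: "Et \<subseteq> EH" using r(8) unfolding active_collider_tree_def collider_tree_def by blast
  have EHV: "EH \<subseteq> V \<times> V" and acy: "acyclic EH" using r(7) unfolding is_dag_def by simp_all
  have notsub: "\<not> Et \<subseteq> G"
  proof
    assume "Et \<subseteq> G"
    then have pp: "is_path G p \<and> hd p = x' \<and> last p = y' \<and> active G Z p"
      by (rule tree_to_path[OF r(8) _ asym])
    have "(x' = x \<and> y' = y) \<or> (x' = y \<and> y' = x)" using r(1) by (metis doubleton_eq_iff)
    then show False
    proof
      assume "x' = x \<and> y' = y"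
      then show False using pp ds unfolding d_separated_def by blast
    next
      assume e: "x' = y \<and> y' = x"
      have "\<not> d_separated G x y Z" using connected_sym[of G p y x Z] pp e by blast
      then show False using ds by blast
    qed
  qed
  then obtain u v where uv: "(u,v) \<in> Et" "(u,v) \<notin> G" by auto
  have "(u,v) \<in> EH" using uv(1) EtEH by blast
  then have "u \<in> V" "v \<in> V" using EHV by auto
  moreover have "u \<noteq> v"
  proof
    assume "u = v"
    then have "(u,u) \<in> EH\<^sup>+" using \<open>(u,v) \<in> EH\<close> by blast
    then show False using acy unfolding acyclic_def by blast
  qed
  ultimately show ?thesis using uv inU by blast
qed


theorem proposition2:
  fixes V :: "'v set" and S :: "'v sent set"
  assumes "finite V"
    and "preferred_ext (ds_rules V) (ds_asms V) ds_ctr S \<or> stable_ext (ds_rules V) (ds_asms V) ds_ctr S"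
  shows "\<forall>x\<in>V. \<forall>y\<in>V. \<forall>Z. x \<noteq> y \<and> Z \<subseteq> V - {x, y} \<longrightarrow>
           (Asm (Ind {x, y} Z) \<in> S \<longleftrightarrow> d_separated (graph_of S) x y Z)"
proof (intro ballI allI impI)
  let ?R = "ds_rules V" and ?A = "ds_asms V" and ?G = "graph_of S"
  fix x y Z assume xV: "x \<in> V" and yV: "y \<in> V" and h: "x \<noteq> y \<and> Z \<subseteq> V - {x, y}"
  have xy: "x \<noteq> y" and ZV: "Z \<subseteq> V - {x,y}" using h by simp_all
  have adm: "admissible ?R ?A ds_ctr S"
    using assms(2)
  proof
    assume "preferred_ext ?R ?A ds_ctr S"
    then show ?thesis unfolding preferred_ext_def complete_ext_def by simp
  next
    assume "stable_ext ?R ?A ds_ctr S"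
    then show ?thesis unfolding stable_ext_def by simp
  qed
  have adm': "S \<subseteq> ?A \<and> \<not> attacks ?R ?A ds_ctr S S \<and> defends ?R ?A ds_ctr S S"
    using adm unfolding admissible_def conflict_free_def .
  have SA: "S \<subseteq> ?A" using adm' by (rule conjunct1)
  have cf: "\<not> attacks ?R ?A ds_ctr S S" using adm' by (metis conjunct1 conjunct2)
  have acyc: "acyclic ?G" by (rule graph_acyclic[OF SA cf])
  have GV: "?G \<subseteq> V \<times> V" by (rule graph_sub[OF SA])
  have asym: "\<forall>u v. (u,v) \<in> ?G \<longrightarrow> (v,u) \<notin> ?G"
  proof (intro allI impI notI)
    fix u v assume "(u,v) \<in> ?G" "(v,u) \<in> ?G"
    then have "(u,u) \<in> ?G\<^sup>+" by (meson trancl.trancl_into_trancl r_into_trancl)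
    then show False using acyc unfolding acyclic_def by blast
  qed
  have dag: "is_dag V ?G" unfolding is_dag_def using GV acyc by (rule conjI)
  have IA: "Asm (Ind {x,y} Z) \<in> ?A" by (rule Ind_in_asms[OF xV yV xy ZV])
  show "Asm (Ind {x, y} Z) \<in> S \<longleftrightarrow> d_separated ?G x y Z"
  proof
    assume IS: "Asm (Ind {x, y} Z) \<in> S"
    show "d_separated ?G x y Z"
    proof (rule ccontr)
      assume "\<not> d_separated ?G x y Z"
      then obtain p where p: "is_path ?G p" "hd p = x" "last p = y" "active ?G Z p"
        unfolding d_separated_def by blast
      obtain Vt Et where t: "active_collider_tree V ?G x y Z Vt Et p" "Et \<subseteq> ?G"
        using path_to_tree[OF p GV xV] by blast
      have r: "(Ctr (Ind {x, y} Z), arr_body Et) \<in> ?R" by (rule rule_iv[OF xV yV xy ZV dag t(1)])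
      have "finite Et" using t(2) GV assms(1) finite_subset by (metis finite_cartesian_product)
      then have fin: "finite (arr_body Et)" unfolding arr_body_image by (rule finite_imageI)
      have sub: "arr_body Et \<subseteq> S"
      proof
        fix s assume "s \<in> arr_body Et"
        then obtain u v where "s = Asm (Arr u v)" "(u,v) \<in> Et" unfolding arr_body_def by blast
        then show "s \<in> S" using t(2) unfolding graph_of_def by blast
      qed
      have "derivable ?R ?A S (Ctr (Ind {x, y} Z))" by (rule derive_rule_set[OF r fin sub SA])
      then have "attacks ?R ?A ds_ctr S S" using IS by (rule attack_by)
      then show False using cf by (rule notE[rotated])
    qed
  next
    assume ds: "d_separated ?G x y Z"
    from assms(2) show "Asm (Ind {x, y} Z) \<in> S"
    proof
      assume pref: "preferred_ext ?R ?A ds_ctr S"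
      then have compl: "complete_ext ?R ?A ds_ctr S" unfolding preferred_ext_def by simp
      have "defends ?R ?A ds_ctr S {Asm (Ind {x, y} Z)}"
        unfolding defends_def
      proof (intro allI impI)
        fix U assume U: "U \<subseteq> ?A" "attacks ?R ?A ds_ctr U {Asm (Ind {x, y} Z)}"
        then have "derivable ?R ?A U (Ctr (Ind {x, y} Z))" unfolding attacks_def by simp
        then obtain u v where uv: "Asm (Arr u v) \<in> U" "(u,v) \<notin> ?G" "u \<in> V" "v \<in> V" "u \<noteq> v"
          using ind_attack_edge[OF _ ds asym] by blast
        have nS: "Asm (Arr u v) \<notin> S" using uv(2) unfolding graph_of_def by simp
        have "Asm (Arr u v) \<in> S \<or> Asm (Arr v u) \<in> S \<or> Asm (Noe {u,v}) \<in> S"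
          by (rule preferred_decided[OF assms(1) pref uv(3,4,5)])
        then have "Asm (Arr v u) \<in> S \<or> Asm (Noe {u,v}) \<in> S" using nS by simp
        then show "attacks ?R ?A ds_ctr S U"
        proof
          assume a: "Asm (Arr v u) \<in> S"
          have "(Ctr (Arr u v), {Asm (Arr v u)}) \<in> ?R" using rule_i[of u V v "Arr u v" "Arr v u"] uv(3,4,5) by simp
          moreover have "Asm (Arr v u) \<in> ?A" using a SA by (rule subsetD[rotated])
          ultimately have "derivable ?R ?A S (Ctr (Arr u v))" using a by (intro derive_rule1)
          then show ?thesis using uv(1) by (rule attack_by)
        next
          assume a: "Asm (Noe {u,v}) \<in> S"
          have "(Ctr (Arr u v), {Asm (Noe {u,v})}) \<in> ?R" using rule_i[of u V v "Arr u v" "Noe {u,v}"] uv(3,4,5) by simp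
          moreover have "Asm (Noe {u,v}) \<in> ?A" using a SA by (rule subsetD[rotated])
          ultimately have "derivable ?R ?A S (Ctr (Arr u v))" using a by (intro derive_rule1)
          then show ?thesis using uv(1) by (rule attack_by)
        qed
      qed
      moreover have "{Asm (Ind {x, y} Z)} \<subseteq> ?A" using IA by simp
      ultimately have "{Asm (Ind {x, y} Z)} \<subseteq> S" using compl unfolding complete_ext_def by blast
      then show ?thesis by simp
    next
      assume st: "stable_ext ?R ?A ds_ctr S"
      show ?thesis
      proof (rule ccontr)
        assume nI: "Asm (Ind {x, y} Z) \<notin> S"
        have "\<forall>a\<in>?A - S. attacks ?R ?A ds_ctr S {a}" using st unfolding stable_ext_def by simp
        then have "attacks ?R ?A ds_ctr S {Asm (Ind {x, y} Z)}" using IA nI by blast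
        then have "derivable ?R ?A S (Ctr (Ind {x, y} Z))" unfolding attacks_def by simp
        then obtain u v where uv: "Asm (Arr u v) \<in> S" "(u,v) \<notin> ?G"
          using ind_attack_edge[OF _ ds asym] by blast
        then show False unfolding graph_of_def by simp
      qed
    qed
  qed
qed


end
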